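(* Let $X_0^*$ be a $\{1,2,\dots\}$-valued random variable with $\mathbf P(X_0^*\ge2)>0$ and $\mathbf E(X_0^*m^{X_0^*})<\infty$, let $p>p_c$, let $X_0$ have law $(1-p)\delta_0+pP_{X_0^*}$, and let $n\ge0$. Then: (i) $\Theta_n(s)\in[0,1+\delta_n]$ for all $s\in[0,m)$; (ii) if $\delta_n\le1$, then for all $s\in[\frac m2,m)$, $$\Theta_{n+1}(s)\ge\frac ms\,\Theta_n(s)\,H_n(s)^{m-1}-\frac{\kappa(m-s)}{s}\,[\delta_n-\varphi_n(s)]^2H_n(s)^{m-2},$$ where $\kappa:=3^{m-2}+1$.
   Context: Fix an integer $m\ge2$. Recursive system: $X_{n+1}$ has the law of $(X_{n,1}+\cdots+X_{n,m}-1)^+$, with $X_{n,i}$ independent copies of $X_n$. $p_c:=\frac{1}{1+\mathbf E\{[(m-1)X_0^*-1]m^{X_0^*}\}}$. $H_n(s):=\mathbf E(s^{X_n})$; $\delta_n:=(m-1)\mathbf E(X_nm^{X_n})-\mathbf E(m^{X_n})$; $\varphi_n(s):=(m-1)sH_n'(s)-H_n(s)$; and $$\Theta_n(s):=[H_n(s)-s(s-1)H_n'(s)]-\frac{(m-1)(m-s)}{m}[2sH_n'(s)+s^2H_n''(s)]+\delta_n .$$ *)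

theory Defs
  imports "HOL-Probability.Probability"
begin

fun sum_iid :: "nat \<Rightarrow> nat pmf \<Rightarrow> nat pmf" where
  "sum_iid 0 q = return_pmf 0"
| "sum_iid (Suc k) q = bind_pmf q (\<lambda>x. map_pmf (\<lambda>y. x + y) (sum_iid k q))"

text \<open>One step of the recursive system: law of (X_1+...+X_m - 1)^+ (truncated nat subtraction).\<close>
definition step :: "nat \<Rightarrow> nat pmf \<Rightarrow> nat pmf" where
  "step m q = map_pmf (\<lambda>k. k - 1) (sum_iid m q)"

definition X0law :: "real \<Rightarrow> nat pmf \<Rightarrow> nat pmf" where
  "X0law p Xs = bind_pmf (bernoulli_pmf p) (\<lambda>b. if b then Xs else return_pmf 0)"

definition lawX :: "nat \<Rightarrow> real \<Rightarrow> nat pmf \<Rightarrow> nat \<Rightarrow> nat pmf" where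
  "lawX m p Xs n = (step m ^^ n) (X0law p Xs)"

definition p_crit :: "nat \<Rightarrow> nat pmf \<Rightarrow> real" where
  "p_crit m Xs = 1 / (1 + measure_pmf.expectation Xs
       (\<lambda>k. ((real m - 1) * real k - 1) * real m ^ k))"

definition Hgf :: "nat pmf \<Rightarrow> real \<Rightarrow> real" where
  "Hgf q s = measure_pmf.expectation q (\<lambda>k. s ^ k)"

definition delta :: "nat \<Rightarrow> nat pmf \<Rightarrow> real" where
  "delta m q = (real m - 1) * measure_pmf.expectation q (\<lambda>k. real k * real m ^ k)
               - measure_pmf.expectation q (\<lambda>k. real m ^ k)"

definition phi :: "nat \<Rightarrow> nat pmf \<Rightarrow> real \<Rightarrow> real" where
  "phi m q s = (real m - 1) * s * deriv (Hgf q) s - Hgf q s"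

definition Theta :: "nat \<Rightarrow> nat pmf \<Rightarrow> real \<Rightarrow> real" where
  "Theta m q s = (Hgf q s - s * (s - 1) * deriv (Hgf q) s)
     - (real m - 1) * (real m - s) / real m
         * (2 * s * deriv (Hgf q) s + s\<^sup>2 * deriv (deriv (Hgf q)) s)
     + delta m q"

end

theory Submission imports Defs begin

lemma powser_deriv:
  fixes f :: "real \<Rightarrow> real" and c :: "nat \<Rightarrow> real"
  assumes S: "\<And>z. \<bar>z\<bar> < K \<Longrightarrow> (\<lambda>n. c n * z^n) sums f z" and x: "\<bar>x\<bar> < K"
  shows "(f has_field_derivative deriv f x) (at x)" "(\<lambda>n. diffs c n * x^n) sums deriv f x"
proof -
  have sm: "\<And>z. norm z < K \<Longrightarrow> summable (\<lambda>n. c n * z^n)"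
    using S by (auto simp: sums_iff)
  have d: "((\<lambda>z. \<Sum>n. c n * z^n) has_field_derivative (\<Sum>n. diffs c n * x^n)) (at x)"
    by (rule termdiffs_strong'[OF sm]) (use x in auto)
  have d2: "(f has_field_derivative (\<Sum>n. diffs c n * x^n)) (at x)"
  proof (rule has_field_derivative_transform_within_open[OF d, of "ball 0 K"])
    show "open (ball (0::real) K)" by simp
    show "x \<in> ball 0 K" using x by (simp add: dist_real_def)
    fix z :: real assume "z \<in> ball 0 K"
    then have "\<bar>z\<bar> < K" by (simp add: dist_real_def)
    then show "(\<Sum>n. c n * z^n) = f z" using S sums_unique by metis
  qed
  have e: "deriv f x = (\<Sum>n. diffs c n * x^n)" using DERIV_imp_deriv[OF d2] .
  show "(f has_field_derivative deriv f x) (at x)" using d2 e by simp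
  have "summable (\<lambda>n. diffs c n * x^n)"
    by (rule termdiff_converges[OF _ sm]) (use x in auto)
  then show "(\<lambda>n. diffs c n * x^n) sums deriv f x" using e by (simp add: summable_sums)
qed

lemma sums_shift1:
  fixes c :: "nat \<Rightarrow> real"
  assumes "(\<lambda>n. diffs c n * x^n) sums D"
  shows "(\<lambda>k. c k * (real k * x^k)) sums (x * D)"
proof -
  have "(\<lambda>n. x * (diffs c n * x^n)) sums (x * D)" by (rule sums_mult[OF assms])
  moreover have "(\<lambda>n. x * (diffs c n * x^n)) = (\<lambda>n. (\<lambda>k. c k * (real k * x^k)) (Suc n))"
    by (auto simp: diffs_def algebra_simps)
  ultimately have "(\<lambda>n. (\<lambda>k. c k * (real k * x^k)) (Suc n)) sums (x * D)" by simp
  then show ?thesis by (subst (asm) sums_Suc_iff) simp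
qed

lemma sums_shift2:
  fixes c :: "nat \<Rightarrow> real"
  assumes "(\<lambda>n. diffs (diffs c) n * x^n) sums D"
  shows "(\<lambda>k. c k * (real k * (real k - 1) * x^k)) sums (x^2 * D)"
proof -
  have "(\<lambda>n. x^2 * (diffs (diffs c) n * x^n)) sums (x^2 * D)" by (rule sums_mult[OF assms])
  moreover have "(\<lambda>n. x^2 * (diffs (diffs c) n * x^n)) = (\<lambda>n. (\<lambda>k. c k * (real k * (real k - 1) * x^k)) (Suc (Suc n)))"
    by (auto simp: diffs_def algebra_simps power2_eq_square)
  ultimately have "(\<lambda>n. (\<lambda>k. c k * (real k * (real k - 1) * x^k)) (Suc (Suc n))) sums (x^2 * D)" by simp
  then have "(\<lambda>n. (\<lambda>k. c k * (real k * (real k - 1) * x^k)) (Suc n)) sums (x^2 * D)"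
    by (subst (asm) sums_Suc_iff) simp
  then show ?thesis by (subst (asm) sums_Suc_iff) simp
qed

lemma pmf_nat_sums:
  fixes q :: "nat pmf" and f :: "nat \<Rightarrow> real"
  assumes "integrable (measure_pmf q) f"
  shows "(\<lambda>k. pmf q k * f k) sums (measure_pmf.expectation q f)"
proof -
  have i: "integrable (count_space UNIV) (\<lambda>k. pmf q k * f k)"
    using assms unfolding measure_pmf_eq_density
    by (subst (asm) integrable_density) auto
  have "measure_pmf.expectation q f = integral\<^sup>L (count_space UNIV) (\<lambda>k. pmf q k * f k)"
    unfolding measure_pmf_eq_density by (subst integral_density) auto
  with sums_integral_count_space_nat[OF i] show ?thesis by simp
qed

lemma pmf_nat_integrable:
  fixes q :: "nat pmf" and f :: "nat \<Rightarrow> real"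
  assumes "summable (\<lambda>k. pmf q k * \<bar>f k\<bar>)"
  shows "integrable (measure_pmf q) f"
proof -
  have "integrable (count_space UNIV) (\<lambda>k. pmf q k * f k)"
    unfolding integrable_count_space_nat_iff using assms by (simp add: abs_mult)
  then show ?thesis unfolding measure_pmf_eq_density
    by (subst integrable_density) auto
qed

locale goodq =
  fixes m :: nat and q :: "nat pmf"
  assumes m1: "m \<ge> 1"
    and good: "integrable (measure_pmf q) (\<lambda>k. real k * real m ^ k)"
begin

lemma S1: "(\<lambda>k. pmf q k * (real k * real m ^ k)) sums measure_pmf.expectation q (\<lambda>k. real k * real m ^ k)"
  by (rule pmf_nat_sums[OF good])

lemma S0: "(\<lambda>k. pmf q k) sums 1"
  using pmf_nat_sums[of q "\<lambda>_. 1"] by simp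

lemma int_mpow: "integrable (measure_pmf q) (\<lambda>k. real m ^ k)"
proof (rule pmf_nat_integrable)
  have "summable (\<lambda>k. pmf q k * (real k * real m ^ k) + pmf q k)"
    using S1 S0 by (intro summable_add) (auto simp: sums_iff)
  then show "summable (\<lambda>k. pmf q k * \<bar>real m ^ k\<bar>)"
  proof (rule summable_comparison_test')
    fix k :: nat
    have "real m ^ k \<le> real k * real m ^ k + 1"
    proof (cases k)
      case (Suc j)
      have "0 \<le> real j * real m ^ k" by simp
      then show ?thesis using Suc by (simp add: algebra_simps)
    qed simp
    then show "norm (pmf q k * \<bar>real m ^ k\<bar>) \<le> pmf q k * (real k * real m ^ k) + pmf q k"
    proof -
      have "pmf q k * real m ^ k \<le> pmf q k * (real k * real m ^ k + 1)"
        using \<open>real m ^ k \<le> _\<close> pmf_nonneg[of q k] by (rule mult_left_mono)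
      then show ?thesis by (simp add: algebra_simps)
    qed
  qed
qed

lemma Hs: assumes "\<bar>x\<bar> \<le> real m" shows "(\<lambda>k. pmf q k * x^k) sums Hgf q x"
proof -
  have "integrable (measure_pmf q) (\<lambda>k. x^k)"
  proof (rule pmf_nat_integrable)
    have "summable (\<lambda>k. pmf q k * real m ^ k)" using pmf_nat_sums[OF int_mpow] by (auto simp: sums_iff)
    then show "summable (\<lambda>k. pmf q k * \<bar>x ^ k\<bar>)"
      by (rule summable_comparison_test')
         (use assms in \<open>auto intro!: mult_left_mono simp: power_abs power_mono\<close>)
  qed
  from pmf_nat_sums[OF this] show ?thesis by (simp add: Hgf_def)
qed

lemma H1: assumes "\<bar>x\<bar> < real m"
  shows "(Hgf q has_field_derivative deriv (Hgf q) x) (at x)"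
    "(\<lambda>k. pmf q k * (real k * x^k)) sums (x * deriv (Hgf q) x)"
proof -
  have S: "\<And>z. \<bar>z\<bar> < real m \<Longrightarrow> (\<lambda>n. pmf q n * z^n) sums Hgf q z" using Hs by simp
  show "(Hgf q has_field_derivative deriv (Hgf q) x) (at x)" by (rule powser_deriv(1)[OF S assms])
  show "(\<lambda>k. pmf q k * (real k * x^k)) sums (x * deriv (Hgf q) x)"
    by (rule sums_shift1[OF powser_deriv(2)[OF S assms]])
qed

lemma H2: assumes "\<bar>x\<bar> < real m"
  shows "(deriv (Hgf q) has_field_derivative deriv (deriv (Hgf q)) x) (at x)"
    "(\<lambda>k. pmf q k * (real k * (real k - 1) * x^k)) sums (x^2 * deriv (deriv (Hgf q)) x)"
proof -
  have S: "\<And>z. \<bar>z\<bar> < real m \<Longrightarrow> (\<lambda>n. pmf q n * z^n) sums Hgf q z" using Hs by simp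
  have S2: "\<And>z. \<bar>z\<bar> < real m \<Longrightarrow> (\<lambda>n. diffs (pmf q) n * z^n) sums deriv (Hgf q) z"
    by (rule powser_deriv(2)[OF S])
  show "(deriv (Hgf q) has_field_derivative deriv (deriv (Hgf q)) x) (at x)"
    by (rule powser_deriv(1)[OF S2 assms])
  show "(\<lambda>k. pmf q k * (real k * (real k - 1) * x^k)) sums (x^2 * deriv (deriv (Hgf q)) x)"
    by (rule sums_shift2[OF powser_deriv(2)[OF S2 assms]])
qed

lemma Hd: "(\<lambda>k. pmf q k * (((real m - 1) * real k - 1) * real m ^ k)) sums delta m q"
proof -
  have "(\<lambda>k. (real m - 1) * (pmf q k * (real k * real m ^ k)) - pmf q k * real m ^ k) sums delta m q"
    unfolding delta_def
    by (intro sums_diff sums_mult S1 pmf_nat_sums[OF int_mpow])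
  then show ?thesis by (simp add: algebra_simps)
qed

end

definition gg :: "real \<Rightarrow> nat \<Rightarrow> real \<Rightarrow> real" where
  "gg M k x = x^k - (x-1)*(real k*x^k) - (M-1)*(M-x)/M*(real k*(real k+1)*x^k)"

lemma gg_poly:
  assumes "M \<noteq> 0"
  shows "gg M k x = (1 + real k - (M-1)*real k*(real k+1)) * x^k + ((M-1)*real k*(real k+1)/M - real k) * x^Suc k"
  using assms unfolding gg_def by (simp add: field_simps power_Suc)

lemma gg_deriv:
  assumes "M \<ge> 2" "0 \<le> x" "x \<le> M"
  shows "\<exists>y. ((\<lambda>x. - gg M k x) has_real_derivative y) (at x) \<and> y \<ge> 0"
proof (cases k)
  case 0
  then show ?thesis by (intro exI[of _ 0]) (auto simp: gg_def)
next
  case (Suc j)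
  have M0: "M \<noteq> 0" using assms by auto
  define a1 where "a1 = 1 + real k - (M-1)*real k*(real k+1)"
  define a2 where "a2 = (M-1)*real k*(real k+1)/M - real k"
  have eq: "(\<lambda>x. - gg M k x) = (\<lambda>x. - (a1 * x^k + a2 * x^Suc k))"
    using gg_poly[OF M0] by (simp add: a1_def a2_def)
  define y where "y = - (a1 * (real k * x^(k-1)) + a2 * (real (Suc k) * x^k))"
  have d: "((\<lambda>x. - (a1 * x^k + a2 * x^Suc k)) has_real_derivative y) (at x)"
  proof -
    have xx: "x * (real j * x^(j - Suc 0)) = real j * x^j" by (cases j) auto
    show ?thesis
      unfolding y_def Suc by (auto intro!: derivative_eq_intros simp: algebra_simps xx)
  qed
  have sc: "- (a1 * real k + a2 * (real k + 1) * x) = real k * (real k + 1) * ((M-1)*real k - 1) * (M - x) / M"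
    unfolding a1_def a2_def using M0 by (simp add: field_simps)
  have "y = x^j * (- (a1 * real k + a2 * (real k + 1) * x))"
    unfolding y_def using Suc by (simp add: algebra_simps)
  also have "\<dots> = x^j * (real k * (real k + 1) * ((M-1)*real k - 1) * (M - x) / M)"
    by (simp only: sc)
  finally have ye: "y = x^j * (real k * (real k + 1) * ((M-1)*real k - 1) * (M - x) / M)" .
  have "(M-1)*real k - 1 \<ge> 0"
  proof -
    have "(M-1)*real k \<ge> 1 * 1" using assms Suc by (intro mult_mono) auto
    then show ?thesis by simp
  qed
  then have "y \<ge> 0" unfolding ye using assms
    by (intro mult_nonneg_nonneg divide_nonneg_nonneg) auto
  with d show ?thesis unfolding eq by blast
qed

lemma gg_mono:
  assumes "M \<ge> 2" "0 \<le> a" "a \<le> b" "b \<le> M"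
  shows "gg M k b \<le> gg M k a"
proof -
  have "- gg M k a \<le> - gg M k b"
    by (rule DERIV_nonneg_imp_nondecreasing[OF assms(3)]) (use assms gg_deriv in auto)
  then show ?thesis by simp
qed

lemma tt_bounds:
  assumes "M \<ge> 2" "0 \<le> s" "s \<le> M"
  shows "0 \<le> gg M k s + ((M-1)*real k - 1)*M^k"
    "gg M k s + ((M-1)*real k - 1)*M^k \<le> (if k = 0 then 1 else 0) + ((M-1)*real k - 1)*M^k"
proof -
  have "gg M k M = - (((M-1)*real k - 1)*M^k)" by (simp add: gg_def algebra_simps)
  with gg_mono[OF assms(1,2,3) order_refl, of k] assms show "0 \<le> gg M k s + ((M-1)*real k - 1)*M^k" by simp
  have "gg M k 0 = (if k = 0 then 1 else 0)" by (cases k) (simp_all add: gg_def)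
  with gg_mono[OF assms(1) order_refl assms(2) assms(3), of k] 
  show "gg M k s + ((M-1)*real k - 1)*M^k \<le> (if k = 0 then 1 else 0) + ((M-1)*real k - 1)*M^k" by simp
qed

lemma nn_pow_sum_iid:
  fixes x :: real assumes "0 \<le> x"
  shows "(\<integral>\<^sup>+k. ennreal (x^k) \<partial>sum_iid j q) = (\<integral>\<^sup>+k. ennreal (x^k) \<partial>q)^j"
proof (induction j)
  case 0 then show ?case by simp
next
  case (Suc j)
  have "(\<integral>\<^sup>+k. ennreal (x^k) \<partial>sum_iid (Suc j) q)
      = (\<integral>\<^sup>+a. \<integral>\<^sup>+b. ennreal (x^a) * ennreal (x^b) \<partial>sum_iid j q \<partial>q)"
    using assms by (simp add: power_add ennreal_mult)
  also have "\<dots> = (\<integral>\<^sup>+a. ennreal (x^a) * (\<integral>\<^sup>+b. ennreal (x^b) \<partial>sum_iid j q) \<partial>q)"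
    by (simp add: nn_integral_cmult)
  also have "\<dots> = (\<integral>\<^sup>+a. ennreal (x^a) \<partial>q) * (\<integral>\<^sup>+b. ennreal (x^b) \<partial>sum_iid j q)"
    by (simp add: nn_integral_multc)
  finally show ?case using Suc by (simp add: mult.commute)
qed

lemma nn_kpow_sum_iid:
  fixes x :: real assumes "0 \<le> x"
  shows "(\<integral>\<^sup>+k. ennreal (real k * x^k) \<partial>sum_iid j q)
     = of_nat j * (\<integral>\<^sup>+k. ennreal (x^k) \<partial>q)^(j-1) * (\<integral>\<^sup>+k. ennreal (real k * x^k) \<partial>q)"
proof (induction j)
  case 0 then show ?case by simp
next
  case (Suc j)
  define H where "H = (\<integral>\<^sup>+k. ennreal (x^k) \<partial>q)"
  define A where "A = (\<integral>\<^sup>+k. ennreal (real k * x^k) \<partial>q)"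
  have "(\<integral>\<^sup>+k. ennreal (real k * x^k) \<partial>sum_iid (Suc j) q)
      = (\<integral>\<^sup>+a. \<integral>\<^sup>+b. ennreal (real a * x^a) * ennreal (x^b) + ennreal (x^a) * ennreal (real b * x^b) \<partial>sum_iid j q \<partial>q)"
  proof -
    have eq: "ennreal ((real a + real b) * x^(a+b)) = ennreal (real a * x^a) * ennreal (x^b) + ennreal (x^a) * ennreal (real b * x^b)" for a b
    proof -
      have "ennreal ((real a + real b) * x^(a+b)) = ennreal (real a * x^a * x^b + x^a * (real b * x^b))"
        by (simp add: power_add algebra_simps)
      also have "\<dots> = ennreal (real a * x^a * x^b) + ennreal (x^a * (real b * x^b))"
        using assms by (intro ennreal_plus) auto
      also have "\<dots> = ennreal (real a * x^a) * ennreal (x^b) + ennreal (x^a) * ennreal (real b * x^b)"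
        using assms by (simp add: ennreal_mult)
      finally show ?thesis .
    qed
    show ?thesis by (simp add: eq)
  qed
  also have "\<dots> = (\<integral>\<^sup>+a. ennreal (real a * x^a) * (\<integral>\<^sup>+b. ennreal (x^b) \<partial>sum_iid j q)
         + ennreal (x^a) * (\<integral>\<^sup>+b. ennreal (real b * x^b) \<partial>sum_iid j q) \<partial>q)"
    by (simp add: nn_integral_cmult nn_integral_add)
  also have "\<dots> = A * H^j + H * (of_nat j * H^(j-1) * A)"
    by (simp add: nn_integral_add nn_integral_multc nn_pow_sum_iid[OF assms] Suc[folded H_def A_def] H_def A_def)
  also have "\<dots> = of_nat (Suc j) * H^(Suc j - 1) * A"
    by (cases j) (simp_all add: algebra_simps)
  finally show ?case unfolding H_def A_def .
qed


context goodq
begin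

lemma Theta_sums: assumes "\<bar>s\<bar> < real m"
  shows "(\<lambda>k. pmf q k * (gg (real m) k s + ((real m - 1)*real k - 1)*real m^k)) sums Theta m q s"
proof -
  define CC where "CC = (real m - 1) * (real m - s) / real m"
  have "(\<lambda>k. pmf q k * s^k - (s-1)*(pmf q k*(real k* s^k))
        - CC*(2*(pmf q k*(real k* s^k)) + pmf q k*(real k*(real k - 1)* s^k))
        + pmf q k*(((real m - 1)*real k - 1)*real m^k))
     sums (Hgf q s - (s-1)*(s*deriv (Hgf q) s) - CC*(2*(s*deriv (Hgf q) s) + s^2*deriv (deriv (Hgf q)) s) + delta m q)"
    using assms by (intro sums_add sums_diff sums_mult Hs H1(2) H2(2) Hd) auto
  moreover have "(\<lambda>k. pmf q k * s^k - (s-1)*(pmf q k*(real k* s^k))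
        - CC*(2*(pmf q k*(real k* s^k)) + pmf q k*(real k*(real k - 1)* s^k))
        + pmf q k*(((real m - 1)*real k - 1)*real m^k))
     = (\<lambda>k. pmf q k * (gg (real m) k s + ((real m - 1)*real k - 1)*real m^k))"
    using m1 by (intro ext) (simp add: gg_def CC_def field_simps)
  moreover have "Hgf q s - (s-1)*(s*deriv (Hgf q) s) - CC*(2*(s*deriv (Hgf q) s) + s^2*deriv (deriv (Hgf q)) s) + delta m q
     = Theta m q s"
    by (simp add: Theta_def CC_def algebra_simps)
  ultimately show ?thesis by simp
qed

lemma part_i: assumes "m \<ge> 2" "0 \<le> s" "s < real m"
  shows "0 \<le> Theta m q s \<and> Theta m q s \<le> 1 + delta m q"
proof
  have M2: "real m \<ge> 2" using assms by simp
  have sm: "\<bar>s\<bar> < real m" using assms by simp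
  show "0 \<le> Theta m q s"
    by (rule sums_le[OF _ sums_zero Theta_sums[OF sm]])
       (use tt_bounds(1)[OF M2 assms(2)] assms in \<open>auto intro!: mult_nonneg_nonneg\<close>)
  have S: "(\<lambda>k. pmf q k * (if k = 0 then 1 else 0) + pmf q k * (((real m - 1)*real k - 1)*real m^k)) sums (pmf q 0 + delta m q)"
  proof (intro sums_add Hd)
    have "(\<lambda>k. if k = 0 then pmf q k else 0) sums pmf q 0" by (rule sums_single)
    then show "(\<lambda>k. pmf q k * (if k = 0 then 1 else 0)) sums pmf q 0"
      by (simp add: if_distrib cong: if_cong)
  qed
  have le: "pmf q k * (gg (real m) k s + ((real m - 1)*real k - 1)*real m^k)
     \<le> pmf q k * (if k = 0 then 1 else 0) + pmf q k * (((real m - 1)*real k - 1)*real m^k)" for k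
    unfolding distrib_left[symmetric]
    by (rule mult_left_mono) (use tt_bounds(2)[OF M2 assms(2)] assms in auto)
  have "Theta m q s \<le> pmf q 0 + delta m q"
    by (rule sums_le[OF le Theta_sums[OF sm] S])
  then show "Theta m q s \<le> 1 + delta m q" using pmf_le_1[of q 0] by linarith
qed

end


lemma key_identity:
  fixes F F1 F2 P c s M Fm d G G1 G2 :: real
  assumes "s \<noteq> 0" "M \<noteq> 0"
  and "G = F*F*P/s + c*(1 - 1/s)"
  and "G1 = M*(F*P)*F1/s - F*F*P/s^2 + c/s^2"
  and "G2 = M*((M-1)*P*F1*F1 + F*P*F2)/s - M*(F*P)*F1/s^2 - M*(F*P)*F1/s^2 + 2*(F*F*P)/s^3 - 2*c/s^3"
  shows "(G - s * (s-1)*G1 - (M-1)*(M-s)/M*(2 * s * G1 + s^2*G2) + Fm*d)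
     - M/s*(F - s * (s-1)*F1 - (M-1)*(M-s)/M*(2 * s * F1 + s^2*F2) + d)*(F*P)
     = Fm*d - M/s*(F*P)*d - (M-s)*P*((M-1) * s * F1 - F)^2/s"
  using assms(1,2) unfolding assms(3-5)
  by (simp add: field_simps power2_eq_square power3_eq_cube)

lemma pow_convex:
  fixes a b :: real assumes "0 \<le> a" "a \<le> b"
  shows "real k * a^(k-1) * (b - a) \<le> b^k - a^k"
proof (induction k)
  case 0 then show ?case by simp
next
  case (Suc k)
  have "b^(Suc k) - a^(Suc k) = b * (b^k - a^k) + a^k * (b - a)" by (simp add: algebra_simps)
  also have "\<dots> \<ge> b * (real k * a^(k-1) * (b - a)) + a^k * (b - a)"
    using Suc assms by (intro add_right_mono mult_left_mono) auto
  also have "b * (real k * a^(k-1) * (b - a)) \<ge> a * (real k * a^(k-1) * (b - a))"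
    using assms by (intro mult_right_mono) auto
  moreover have "a * (real k * a^(k-1) * (b - a)) = real k * a^k * (b-a)"
    by (cases k) (auto simp: algebra_simps)
  ultimately show ?case by (simp add: algebra_simps)
qed

lemma final_ineq:
  fixes F Fm F1 d ph s M P K :: real and j :: nat
  assumes s: "0 < s" "s < M" and F: "0 \<le> F" and P: "P = F^j" and M: "M = real j + 2"
    and Fm: "Fm \<ge> F + (M-s)*F1" and F1: "F1 \<ge> 0" and ph: "ph = (M-1) * s * F1 - F"
    and d: "d \<ge> ph" "d \<ge> 0" and K: "K \<ge> 1"
  shows "Fm^(j+1)*d - M/s*(F*P)*d - (M-s)*P*ph^2/s \<ge> - (K*(M-s)/s*(d-ph)^2*P)"
proof -
  have P0: "P \<ge> 0" using P F by simp
  have FFm: "F \<le> Fm" using Fm F1 s by (smt (verit) mult_nonneg_nonneg)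
  have pw: "real (j+1) * F^j * (Fm - F) \<le> Fm^(j+1) - F^(j+1)"
    using pow_convex[OF F FFm, of "j+1"] by simp
  have E1: "Fm^(j+1) \<ge> F*P + (M-1)*P*(Fm - F)"
    using pw P M by (simp add: algebra_simps)
  have "(M-1)*P*(Fm - F) \<ge> (M-1)*P*((M-s)*F1)"
    using Fm P0 M by (intro mult_left_mono) auto
  with E1 have E2: "Fm^(j+1) \<ge> F*P + (M-s)*P*((M-1)*F1)" by (simp add: algebra_simps)
  have E3: "Fm^(j+1)*d \<ge> (F*P + (M-s)*P*((M-1)*F1))*d"
    using E2 d(2) by (rule mult_right_mono)
  have key: "s*(Fm^(j+1)*d) - M*(F*P)*d - (M-s)*P*ph^2 + K*(M-s)*(d-ph)^2*P
     \<ge> (M-s)*P*((d-ph)*(ph + K*(d-ph)))"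
  proof -
    have "s*(Fm^(j+1)*d) \<ge> s*((F*P + (M-s)*P*((M-1)*F1))*d)"
      using E3 s by (intro mult_left_mono) auto
    moreover have "s*((F*P + (M-s)*P*((M-1)*F1))*d) = s*F*P*d + (M-s)*P*d*(ph + F)"
      unfolding ph by (simp add: algebra_simps)
    ultimately show ?thesis using M by (simp add: algebra_simps power2_eq_square)
  qed
  have nn: "(M-s)*P*((d-ph)*(ph + K*(d-ph))) \<ge> 0"
  proof -
    have "ph + K*(d-ph) \<ge> 0"
    proof (cases "ph \<ge> 0")
      case True
      then show ?thesis using d K by (smt (verit) mult_nonneg_nonneg)
    next
      case False
      have "ph + K*(d-ph) = K*d + (K - 1)*(-ph)" by (simp add: algebra_simps)
      moreover have "K*d \<ge> 0" "(K - 1)*(-ph) \<ge> 0" using False d K by (simp_all, simp add: mult_nonneg_nonpos)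
      ultimately show ?thesis by linarith
    qed
    then show ?thesis using s P0 d by (intro mult_nonneg_nonneg) auto
  qed
  have "s*(Fm^(j+1)*d - M/s*(F*P)*d - (M-s)*P*ph^2/s + K*(M-s)/s*(d-ph)^2*P)
      = s*(Fm^(j+1)*d) - M*(F*P)*d - (M-s)*P*ph^2 + K*(M-s)*(d-ph)^2*P"
    using s by (simp add: field_simps)
  with key nn have "s*(Fm^(j+1)*d - M/s*(F*P)*d - (M-s)*P*ph^2/s + K*(M-s)/s*(d-ph)^2*P) \<ge> 0"
    by linarith
  then have "Fm^(j+1)*d - M/s*(F*P)*d - (M-s)*P*ph^2/s + K*(M-s)/s*(d-ph)^2*P \<ge> 0"
    using s by (simp add: zero_le_mult_iff)
  then show ?thesis by linarith
qed


lemma NN: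
  fixes r :: "nat pmf" and f :: "nat \<Rightarrow> real"
  assumes "\<And>k. 0 \<le> f k" "(\<integral>\<^sup>+k. ennreal (f k) \<partial>r) = ennreal x" "0 \<le> x"
  shows "integrable r f" "measure_pmf.expectation r f = x"
proof -
  show "integrable r f"
    by (rule integrableI_nn_integral_finite[OF _ _ assms(2)]) (use assms in auto)
  have "measure_pmf.expectation r f = enn2real (\<integral>\<^sup>+k. ennreal (f k) \<partial>r)"
    by (rule integral_eq_nn_integral) (use assms in auto)
  then show "measure_pmf.expectation r f = x" using assms by simp
qed

definition stepc :: "nat \<Rightarrow> nat pmf \<Rightarrow> real" where
  "stepc m q = measure_pmf.expectation (sum_iid m q) (\<lambda>k. if k = 0 then 1 else 0)"

context goodq
begin

lemma int_pow: assumes "\<bar>x\<bar> \<le> real m" shows "integrable (measure_pmf q) (\<lambda>k. x^k)"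
proof (rule pmf_nat_integrable)
  have "summable (\<lambda>k. pmf q k * real m ^ k)" using pmf_nat_sums[OF int_mpow] by (auto simp: sums_iff)
  then show "summable (\<lambda>k. pmf q k * \<bar>x ^ k\<bar>)"
    by (rule summable_comparison_test')
       (use assms in \<open>auto intro!: mult_left_mono simp: power_abs power_mono\<close>)
qed

lemma Hgf_nonneg: assumes "0 \<le> x" shows "0 \<le> Hgf q x"
  unfolding Hgf_def by (rule Bochner_Integration.integral_nonneg) (use assms in auto)

lemma ennH: assumes "0 \<le> x" "x \<le> real m"
  shows "(\<integral>\<^sup>+k. ennreal (x^k) \<partial>q) = ennreal (Hgf q x)"
  unfolding Hgf_def by (rule nn_integral_eq_integral) (use assms int_pow in auto)

lemma ennA: "(\<integral>\<^sup>+k. ennreal (real k * real m^k) \<partial>q) = ennreal (measure_pmf.expectation q (\<lambda>k. real k * real m ^ k))"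
  by (rule nn_integral_eq_integral) (use good in auto)

lemma iid_pow: assumes "0 \<le> x" "x \<le> real m"
  shows "integrable (sum_iid j q) (\<lambda>k. x^k)" "Hgf (sum_iid j q) x = Hgf q x ^ j"
proof -
  have e: "(\<integral>\<^sup>+k. ennreal (x^k) \<partial>sum_iid j q) = ennreal (Hgf q x ^ j)"
    using nn_pow_sum_iid[OF assms(1), of j q] ennH[OF assms] Hgf_nonneg[OF assms(1)]
    by (simp add: ennreal_power)
  show "integrable (sum_iid j q) (\<lambda>k. x^k)"
    by (rule NN(1)[OF _ e]) (use assms Hgf_nonneg in auto)
  show "Hgf (sum_iid j q) x = Hgf q x ^ j"
    unfolding Hgf_def[of "sum_iid j q"]
    by (rule NN(2)[OF _ e]) (use assms Hgf_nonneg[OF assms(1)] in \<open>auto simp: Hgf_def\<close>)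
qed

lemma A_nonneg: "0 \<le> measure_pmf.expectation q (\<lambda>k. real k * real m ^ k)"
  by (rule Bochner_Integration.integral_nonneg) auto

lemma iid_kpow:
  shows "integrable (sum_iid j q) (\<lambda>k. real k * real m^k)"
    "measure_pmf.expectation (sum_iid j q) (\<lambda>k. real k * real m^k)
      = real j * Hgf q (real m) ^ (j-1) * measure_pmf.expectation q (\<lambda>k. real k * real m ^ k)"
proof -
  have H0: "0 \<le> Hgf q (real m)" by (rule Hgf_nonneg) simp
  have e: "(\<integral>\<^sup>+k. ennreal (real k * real m^k) \<partial>sum_iid j q)
     = ennreal (real j * Hgf q (real m) ^ (j-1) * measure_pmf.expectation q (\<lambda>k. real k * real m ^ k))"
    using nn_kpow_sum_iid[of "real m" j q] ennH[of "real m"] ennA H0 A_nonneg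
    by (simp add: ennreal_power ennreal_mult ennreal_of_nat_eq_real_of_nat)
  show "integrable (sum_iid j q) (\<lambda>k. real k * real m^k)"
    by (rule NN(1)[OF _ e]) (use H0 A_nonneg in auto)
  show "measure_pmf.expectation (sum_iid j q) (\<lambda>k. real k * real m^k)
      = real j * Hgf q (real m) ^ (j-1) * measure_pmf.expectation q (\<lambda>k. real k * real m ^ k)"
    by (rule NN(2)[OF _ e]) (use H0 A_nonneg in auto)
qed

lemma step_good: "goodq m (step m q)"
proof
  show "1 \<le> m" by (rule m1)
  have "integrable (sum_iid m q) (\<lambda>k. real (k - 1) * real m ^ (k - 1))"
  proof (rule Bochner_Integration.integrable_bound[OF iid_kpow(1)])
    show "AE x in measure_pmf (sum_iid m q). norm (real (x - 1) * real m ^ (x - 1)) \<le> norm (real x * real m ^ x)"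
    proof (intro AE_I2)
      fix k :: nat
      have "real (k - 1) * real m ^ (k - 1) \<le> real k * real m ^ k"
        using m1 by (intro mult_mono power_increasing) auto
      then show "norm (real (k - 1) * real m ^ (k - 1)) \<le> norm (real k * real m ^ k)" by simp
    qed
  qed simp
  then show "integrable (measure_pmf (step m q)) (\<lambda>k. real k * real m ^ k)"
    by (simp add: step_def)
qed

lemma step_Hgf: assumes "0 < x" "x \<le> real m"
  shows "Hgf (step m q) x = Hgf q x ^ m / x + stepc m q * (1 - 1/x)"
proof -
  have i1: "integrable (sum_iid m q) (\<lambda>k. x^k)" using iid_pow(1)[of x m] assms by auto
  have i2: "integrable (sum_iid m q) (\<lambda>k. if k = 0 then 1 else (0::real))"
    by (rule measure_pmf.integrable_const_bound[where B=1]) auto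
  have eq: "(\<lambda>k. x^(k-1)) = (\<lambda>k. x^k / x + (if k = 0 then 1 else 0) * (1 - 1/x))"
  proof
    fix k show "x^(k-1) = x^k / x + (if k = 0 then 1 else 0) * (1 - 1/x)"
      using assms by (cases k) auto
  qed
  have "Hgf (step m q) x = measure_pmf.expectation (sum_iid m q) (\<lambda>k. x^(k-1))"
    by (simp add: Hgf_def step_def)
  also have "\<dots> = measure_pmf.expectation (sum_iid m q) (\<lambda>k. x^k / x + (if k = 0 then 1 else 0) * (1 - 1/x))"
    by (simp only: eq)
  also have "\<dots> = measure_pmf.expectation (sum_iid m q) (\<lambda>k. x^k) / x + stepc m q * (1 - 1/x)"
    using i1 i2 by (simp add: stepc_def)
  also have "\<dots> = Hgf q x ^ m / x + stepc m q * (1 - 1/x)"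
    using iid_pow(2)[of x m] assms by (simp add: Hgf_def)
  finally show ?thesis .
qed

lemma step_delta: "delta m (step m q) = Hgf q (real m) ^ (m-1) * delta m q"
proof -
  define M where "M = real m"
  have M0: "M > 0" using m1 by (simp add: M_def)
  have i1: "integrable (sum_iid m q) (\<lambda>k. real k * M^k)" using iid_kpow(1) by (simp add: M_def)
  have i2: "integrable (sum_iid m q) (\<lambda>k. M^k)" using iid_pow(1)[of M m] M0 by (simp add: M_def)
  have i3: "integrable (sum_iid m q) (\<lambda>k. real (k - 1) * M ^ (k - 1))"
    using goodq.good[OF step_good] by (simp add: step_def M_def)
  have i4: "integrable (sum_iid m q) (\<lambda>k. M ^ (k - 1))"
    using goodq.int_mpow[OF step_good] by (simp add: step_def M_def)
  have eq: "(\<lambda>k. (M-1) * (real (k - 1) * M ^ (k - 1)) - M ^ (k - 1)) = (\<lambda>k. (M-1)/M * (real k * M^k) - M^k)"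
  proof
    fix k show "(M-1) * (real (k - 1) * M ^ (k - 1)) - M ^ (k - 1) = (M-1)/M * (real k * M^k) - M^k"
      using M0 by (cases k) (auto simp: field_simps)
  qed
  have "delta m (step m q) = (M - 1) * measure_pmf.expectation (sum_iid m q) (\<lambda>k. real (k - 1) * M ^ (k - 1))
       - measure_pmf.expectation (sum_iid m q) (\<lambda>k. M ^ (k - 1))"
    by (simp add: delta_def step_def M_def)
  also have "\<dots> = measure_pmf.expectation (sum_iid m q) (\<lambda>k. (M-1) * (real (k - 1) * M ^ (k - 1)) - M ^ (k - 1))"
    using i3 i4 by simp
  also have "\<dots> = measure_pmf.expectation (sum_iid m q) (\<lambda>k. (M-1)/M * (real k * M^k) - M^k)"
    by (simp only: eq)
  also have "\<dots> = (M-1)/M * measure_pmf.expectation (sum_iid m q) (\<lambda>k. real k * M^k) - Hgf (sum_iid m q) M"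
    using i1 i2 by (simp add: Hgf_def)
  also have "\<dots> = (M-1)/M * (real m * Hgf q M ^ (m-1) * measure_pmf.expectation q (\<lambda>k. real k * M ^ k)) - Hgf q M ^ m"
    using iid_kpow(2) iid_pow(2)[of M m] M0 by (simp add: M_def)
  also have "\<dots> = Hgf q M ^ (m-1) * delta m q"
  proof -
    have "Hgf q M ^ m = Hgf q M ^ (m-1) * Hgf q M" using m1
      by (metis Suc_diff_1 less_le_trans zero_less_one power_Suc2)
    then show ?thesis using M0 by (simp add: delta_def M_def Hgf_def field_simps)
  qed
  finally show ?thesis by (simp add: M_def)
qed

end


context goodq
begin

lemma F1_nonneg: assumes "0 < s" "s < real m" shows "0 \<le> deriv (Hgf q) s"
proof -
  have "0 \<le> s * deriv (Hgf q) s"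
    by (rule sums_le[OF _ sums_zero H1(2)]) (use assms in \<open>auto intro!: mult_nonneg_nonneg\<close>)
  then show ?thesis using assms by (simp add: zero_le_mult_iff)
qed

lemma conv_ineq: assumes "0 < s" "s < real m"
  shows "Hgf q (real m) \<ge> Hgf q s + (real m - s) * deriv (Hgf q) s"
proof -
  define M where "M = real m"
  have a: "(\<lambda>k. (M-s)/s * (pmf q k * (real k * s^k))) sums ((M-s)/s * (s * deriv (Hgf q) s))"
    by (rule sums_mult[OF H1(2)]) (use assms in \<open>auto simp: M_def\<close>)
  have b: "(\<lambda>k. pmf q k * M^k - pmf q k * s^k) sums (Hgf q M - Hgf q s)"
    by (rule sums_diff[OF Hs Hs]) (use assms in \<open>auto simp: M_def\<close>)
  have "(M-s)/s * (s * deriv (Hgf q) s) \<le> Hgf q M - Hgf q s"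
  proof (rule sums_le[OF _ a b])
    fix k
    have "(M-s)/s * (real k * s^k) \<le> M^k - s^k"
    proof (cases k)
      case 0 then show ?thesis by simp
    next
      case (Suc i)
      have "(M-s)/s * (real k * s^k) = real k * s^(k-1) * (M - s)"
        using assms Suc by (simp add: field_simps)
      also have "\<dots> \<le> M^k - s^k" by (rule pow_convex) (use assms in \<open>auto simp: M_def\<close>)
      finally show ?thesis .
    qed
    then have "pmf q k * ((M-s)/s * (real k * s^k)) \<le> pmf q k * (M^k - s^k)"
      by (rule mult_left_mono) simp
    then show "(M-s)/s * (pmf q k * (real k * s^k)) \<le> pmf q k * M^k - pmf q k * s^k"
      by (simp add: algebra_simps)
  qed
  moreover have "(M-s)/s * (s * deriv (Hgf q) s) = (M-s)*deriv (Hgf q) s" using assms by simp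
  ultimately show ?thesis by (simp add: M_def)
qed

lemma d_ge_phi: assumes "m \<ge> 2" "0 \<le> s" "s < real m"
  shows "phi m q s \<le> delta m q"
proof -
  define M where "M = real m"
  have pe: "phi m q s = (M-1)*(s*deriv (Hgf q) s) - Hgf q s" by (simp add: phi_def M_def)
  have a: "(\<lambda>k. (M-1) * (pmf q k * (real k * s^k)) - pmf q k * s^k) sums phi m q s"
    unfolding pe
    by (intro sums_diff sums_mult H1(2) Hs) (use assms in \<open>auto simp: M_def\<close>)
  show ?thesis
  proof (rule sums_le[OF _ a Hd[folded M_def]])
    fix k
    have "((M-1)*real k - 1) * s^k \<le> ((M-1)*real k - 1) * M^k"
    proof (cases k)
      case 0 then show ?thesis by simp
    next
      case (Suc i)
      have "(M-1)*real k \<ge> 1 * 1" using assms Suc by (intro mult_mono) (auto simp: M_def)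
      then have "(M-1)*real k - 1 \<ge> 0" by simp
      then show ?thesis using assms by (intro mult_left_mono power_mono) (auto simp: M_def)
    qed
    then have "pmf q k * (((M-1)*real k - 1) * s^k) \<le> pmf q k * (((M-1)*real k - 1) * M^k)"
      by (rule mult_left_mono) simp
    then show "(M-1) * (pmf q k * (real k * s^k)) - pmf q k * s^k \<le> pmf q k * (((M-1)*real k - 1) * M^k)"
      by (simp add: algebra_simps)
  qed
qed

end


lemma derivG:
  fixes F :: "real \<Rightarrow> real"
  assumes dF: "(F has_real_derivative F1) (at z)" and z0: "z \<noteq> 0"
  shows "((\<lambda>z. F z ^ Suc (Suc j) / z + c * (1 - 1/z)) has_real_derivative
      (real (Suc (Suc j)) * (F z * F z ^ j) * F1 / z - F z * F z * F z ^ j / z^2 + c / z^2)) (at z)"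
proof -
  note d1 = DERIV_power[OF dF, of "Suc (Suc j)"]
  note d2 = DERIV_divide[OF d1 DERIV_ident z0]
  note d3 = DERIV_cmult[OF DERIV_diff[OF DERIV_const DERIV_divide[OF DERIV_const DERIV_ident z0]], of c 1 1]
  note d = DERIV_add[OF d2 d3]
  show ?thesis
    by (rule DERIV_cong[OF d]) (use z0 in \<open>simp add: field_simps power2_eq_square\<close>)
qed

lemma derivG1:
  fixes F F1 :: "real \<Rightarrow> real"
  assumes dF: "(F has_real_derivative F1 z) (at z)" and dF1: "(F1 has_real_derivative F2) (at z)"
    and z0: "z \<noteq> 0" and M: "M = real j + 2"
  shows "((\<lambda>z. M * (F z * F z ^ j) * F1 z / z - F z * F z * F z ^ j / z^2 + c / z^2) has_real_derivative
     (M*((M-1)*F z ^ j*F1 z*F1 z + F z * F z ^ j*F2)/z - M*(F z * F z ^ j)*F1 z/z^2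
      - M*(F z * F z ^ j)*F1 z/z^2 + 2*(F z*F z*F z ^ j)/z^3 - 2*c/z^3)) (at z)"
proof -
  have e1: "(\<lambda>z. M * (F z * F z ^ j) * F1 z / z - F z * F z * F z ^ j / z^2 + c / z^2)
     = (\<lambda>z. (M * (F z ^ Suc j * F1 z)) / z - F z ^ Suc (Suc j) / z ^ 2 + c / z ^ 2)"
    by (simp add: algebra_simps)
  have z2: "z ^ 2 \<noteq> 0" using z0 by simp
  note d1 = DERIV_cmult[OF DERIV_mult[OF DERIV_power[OF dF, of "Suc j"] dF1], of M]
  note d2 = DERIV_divide[OF d1 DERIV_ident z0]
  note d3 = DERIV_divide[OF DERIV_power[OF dF, of "Suc (Suc j)"] DERIV_power[OF DERIV_ident, of 2] z2]
  note d4 = DERIV_divide[OF DERIV_const DERIV_power[OF DERIV_ident, of 2] z2, of c]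
  note d = DERIV_add[OF DERIV_diff[OF d2 d3] d4]
  show ?thesis unfolding e1
    by (rule DERIV_cong[OF d]) (use z0 M in \<open>simp add: field_simps power2_eq_square power3_eq_cube\<close>)
qed


context goodq
begin

lemma part_ii:
  assumes m2: "m \<ge> 2" and d0: "delta m q \<ge> 0" and s: "real m / 2 \<le> s" "s < real m"
  shows "Theta m (step m q) s \<ge> real m / s * Theta m q s * Hgf q s ^ (m-1)
     - (3^(m-2)+1)*(real m - s)/s * (delta m q - phi m q s)^2 * Hgf q s^(m-2)"
proof -
  obtain j where hm: "m = Suc (Suc j)" using m2 by (metis add_2_eq_Suc le_Suc_ex)
  define M where "M = real m"
  define F where "F = Hgf q"
  define F1 where "F1 = deriv (Hgf q)"
  define F2 where "F2 = deriv (deriv (Hgf q))"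
  define c where "c = stepc m q"
  define Gf where "Gf = Hgf (step m q)"
  have s0: "0 < s" using s m2 by simp
  define U where "U = {0<..<M}"
  have U: "open U" "s \<in> U" using s0 s by (auto simp: U_def M_def)
  have Geq: "Gf z = F z ^ m / z + c * (1 - 1/z)" if "z \<in> U" for z
    using step_Hgf[of z] that by (auto simp: U_def M_def Gf_def F_def c_def)
  have dF: "(F has_real_derivative F1 z) (at z)" if "z \<in> U" for z
    using H1(1)[of z] that by (auto simp: U_def M_def F_def F1_def)
  have dF1: "(F1 has_real_derivative F2 z) (at z)" if "z \<in> U" for z
    using H2(1)[of z] that by (auto simp: U_def M_def F1_def F2_def)
  define G1 where "G1 z = M * (F z * F z ^ j) * F1 z / z - F z * F z * F z ^ j / z^2 + c / z^2" for z
  define G2 where "G2 z = M*((M-1)*F z ^ j*F1 z*F1 z + F z * F z ^ j*F2 z)/z - M*(F z * F z ^ j)*F1 z/z^2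
      - M*(F z * F z ^ j)*F1 z/z^2 + 2*(F z*F z*F z ^ j)/z^3 - 2*c/z^3" for z
  have dG: "(Gf has_real_derivative G1 z) (at z)" if z: "z \<in> U" for z
  proof -
    have z0: "z \<noteq> 0" using z by (auto simp: U_def)
    have "((\<lambda>z. F z ^ m / z + c * (1 - 1/z)) has_real_derivative G1 z) (at z)"
      using derivG[OF dF[OF z] z0, of j c] by (simp add: G1_def M_def hm)
    then show ?thesis
      by (rule has_field_derivative_transform_within_open[OF _ U(1) z]) (use Geq in auto)
  qed
  have dG1: "(G1 has_real_derivative G2 s) (at s)"
  proof -
    have z0: "s \<noteq> 0" using s0 by simp
    show ?thesis
      unfolding G1_def[abs_def] G2_def
      by (rule derivG1[OF dF[OF U(2)] dF1[OF U(2)] z0]) (simp add: M_def hm)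
  qed
  have dGeq: "deriv Gf z = G1 z" if "z \<in> U" for z using DERIV_imp_deriv[OF dG[OF that]] .
  have ddG: "deriv (deriv Gf) s = G2 s"
  proof -
    have "eventually (\<lambda>z. z \<in> U) (nhds s)" by (rule eventually_nhds_in_open[OF U])
    then have "eventually (\<lambda>z. deriv Gf z = G1 z) (nhds s)" by (rule eventually_mono) (rule dGeq)
    then have "deriv (deriv Gf) s = deriv G1 s" by (rule deriv_cong_ev) simp
    also have "\<dots> = G2 s" by (rule DERIV_imp_deriv[OF dG1])
    finally show ?thesis .
  qed
  define P where "P = F s ^ j"
  define d where "d = delta m q"
  define ph where "ph = phi m q s"
  define Fm where "Fm = F M"
  have ThG: "Theta m (step m q) s = Gf s - s * (s-1)*G1 s - (M-1)*(M-s)/M*(2 * s * G1 s + s^2*G2 s) + Fm^(j+1)*d"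
    unfolding Theta_def Gf_def[symmetric] using dGeq[OF U(2)] ddG step_delta
    by (simp add: M_def Fm_def F_def d_def hm)
  have ThF: "Theta m q s = F s - s * (s-1)*F1 s - (M-1)*(M-s)/M*(2 * s * F1 s + s^2*F2 s) + d"
    by (simp add: Theta_def F_def F1_def F2_def M_def d_def)
  have idt: "Theta m (step m q) s - M/s*Theta m q s*(F s*P)
     = Fm^(j+1)*d - M/s*(F s*P)*d - (M-s)*P*((M-1) * s * F1 s - F s)^2/s"
    unfolding ThG ThF
    by (rule key_identity[where c=c]) (use s0 Geq[OF U(2)] in \<open>auto simp: M_def G1_def G2_def P_def hm\<close>)
  have fin: "Fm^(j+1)*d - M/s*(F s*P)*d - (M-s)*P*ph^2/s \<ge> - ((3^(m-2)+1)*(M-s)/s*(d-ph)^2*P)"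
  proof (rule final_ineq[where ?F1.0="F1 s"])
    show "0 < s" "s < M" using s0 s by (auto simp: M_def)
    show "0 \<le> F s" unfolding F_def by (rule Hgf_nonneg) (use s0 in auto)
    show "P = F s ^ j" by (simp add: P_def)
    show "M = real j + 2" by (simp add: M_def hm)
    show "F s + (M - s) * F1 s \<le> Fm" using conv_ineq[of s] s0 s by (simp add: Fm_def F_def F1_def M_def)
    show "0 \<le> F1 s" using F1_nonneg[of s] s0 s by (simp add: F1_def)
    show "ph = (M - 1) * s * F1 s - F s" by (simp add: ph_def phi_def M_def F1_def F_def)
    show "ph \<le> d" using d_ge_phi[OF m2, of s] s0 s by (simp add: ph_def d_def)
    show "0 \<le> d" using d0 by (simp add: d_def)
    show "(1::real) \<le> 3 ^ (m - 2) + 1" by simp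
  qed
  have "ph = (M-1) * s * F1 s - F s" by (simp add: ph_def phi_def M_def F1_def F_def)
  with idt fin have "Theta m (step m q) s \<ge> M/s*Theta m q s*(F s*P) - ((3^(m-2)+1)*(M-s)/s*(d-ph)^2*P)"
    by simp
  moreover have "F s * P = Hgf q s ^ (m-1)" "P = Hgf q s ^ (m-2)" by (simp_all add: P_def F_def hm)
  ultimately show ?thesis by (simp add: M_def d_def ph_def)
qed

end


lemma pmf_X0: assumes "0 \<le> p" "p \<le> 1"
  shows "pmf (X0law p Xs) k = p * pmf Xs k + (1-p) * (if k = 0 then 1 else 0)"
  unfolding X0law_def pmf_bind using assms by (simp add: pmf_return)

lemma X0_good: assumes "goodq m Xs" "0 \<le> p" "p \<le> 1" shows "goodq m (X0law p Xs)"
proof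
  show "1 \<le> m" using assms goodq.m1 by blast
  have "summable (\<lambda>k. p * (pmf Xs k * (real k * real m ^ k)))"
    using goodq.S1[OF assms(1)] by (intro summable_mult) (auto simp: sums_iff)
  moreover have "(\<lambda>k. pmf (X0law p Xs) k * \<bar>real k * real m ^ k\<bar>) = (\<lambda>k. p * (pmf Xs k * (real k * real m ^ k)))"
    using assms by (auto simp: pmf_X0 algebra_simps)
  ultimately show "integrable (measure_pmf (X0law p Xs)) (\<lambda>k. real k * real m ^ k)"
    by (intro pmf_nat_integrable) simp
qed

lemma X0_delta: assumes "goodq m Xs" "0 \<le> p" "p \<le> 1"
  shows "delta m (X0law p Xs) = p * delta m Xs - (1-p)"
proof -
  define w where "w k = ((real m - 1) * real k - 1) * real m ^ k" for k
  have a: "(\<lambda>k. pmf (X0law p Xs) k * w k) sums delta m (X0law p Xs)"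
    using goodq.Hd[OF X0_good[OF assms]] by (simp add: w_def)
  have "(\<lambda>k. p * (pmf Xs k * w k) + (1-p) * (if k = 0 then w k else 0)) sums (p * delta m Xs + (1-p) * w 0)"
    using goodq.Hd[OF assms(1)] by (intro sums_add sums_mult sums_single) (simp add: w_def)
  moreover have "(\<lambda>k. p * (pmf Xs k * w k) + (1-p) * (if k = 0 then w k else 0)) = (\<lambda>k. pmf (X0law p Xs) k * w k)"
    using assms by (auto simp: pmf_X0 algebra_simps)
  ultimately have "(\<lambda>k. pmf (X0law p Xs) k * w k) sums (p * delta m Xs + (1-p) * w 0)" by simp
  then have "delta m (X0law p Xs) = p * delta m Xs + (1-p) * w 0" by (rule sums_unique2[OF a])
  then show ?thesis by (simp add: w_def)
qed


theorem lemma3p3: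
  fixes m :: nat and Xs :: "nat pmf" and p :: real and n :: nat
  assumes "m \<ge> 2"
    and "0 \<notin> set_pmf Xs"
    and "measure_pmf.prob Xs {2..} > 0"
    and "integrable (measure_pmf Xs) (\<lambda>k. real k * real m ^ k)"
    and "p > p_crit m Xs" and "p \<le> 1"
  shows "(\<forall>s\<in>{0..<real m}.
            0 \<le> Theta m (lawX m p Xs n) s
          \<and> Theta m (lawX m p Xs n) s \<le> 1 + delta m (lawX m p Xs n))
       \<and> (delta m (lawX m p Xs n) \<le> 1 \<longrightarrow>
          (\<forall>s\<in>{real m / 2..<real m}.
            Theta m (lawX m p Xs (Suc n)) s \<ge>
              real m / s * Theta m (lawX m p Xs n) s * Hgf (lawX m p Xs n) s ^ (m - 1)
              - (3 ^ (m - 2) + 1) * (real m - s) / s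
                * (delta m (lawX m p Xs n) - phi m (lawX m p Xs n) s)\<^sup>2
                * Hgf (lawX m p Xs n) s ^ (m - 2)))"
proof -
  have gXs: "goodq m Xs"
  proof (rule goodq.intro)
    show "1 \<le> m" using assms(1) by simp
    show "integrable (measure_pmf Xs) (\<lambda>k. real k * real m ^ k)" by (rule assms(4))
  qed
  define w where "w k = ((real m - 1) * real k - 1) * real m ^ k" for k
  have intw: "integrable (measure_pmf Xs) w"
  proof -
    have "integrable (measure_pmf Xs) (\<lambda>k. (real m - 1) * (real k * real m ^ k) - real m ^ k)"
      by (rule Bochner_Integration.integrable_diff[OF Bochner_Integration.integrable_mult_right[OF assms(4)] goodq.int_mpow[OF gXs]])
    moreover have "(\<lambda>k. (real m - 1) * (real k * real m ^ k) - real m ^ k) = w"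
      by (auto simp: w_def algebra_simps)
    ultimately show ?thesis by simp
  qed
  have Estar: "measure_pmf.expectation Xs w = delta m Xs"
  proof -
    have s1: "(\<lambda>k. pmf Xs k * w k) sums delta m Xs" using goodq.Hd[OF gXs] by (simp add: w_def)
    show ?thesis using sums_unique2[OF pmf_nat_sums[OF intw] s1] .
  qed
  have dstar: "delta m Xs \<ge> 0"
  proof (rule sums_le[OF _ sums_zero goodq.Hd[OF gXs]])
    fix k
    show "0 \<le> pmf Xs k * (((real m - 1) * real k - 1) * real m ^ k)"
    proof (cases k)
      case 0
      then have "pmf Xs k = 0" using assms(2) by (simp add: set_pmf_iff)
      then show ?thesis by simp
    next
      case (Suc i)
      have "(real m - 1) * real k \<ge> 1 * 1" using assms(1) Suc by (intro mult_mono) auto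
      then show ?thesis by (intro mult_nonneg_nonneg) auto
    qed
  qed
  have pc: "p_crit m Xs = 1 / (1 + delta m Xs)"
  proof -
    have weq: "(\<lambda>k. ((real m - 1) * real k - 1) * real m ^ k) = w" by (rule ext) (simp add: w_def)
    show ?thesis unfolding p_crit_def weq Estar ..
  qed
  have p0: "p > 0" using assms(5) pc dstar by (smt (verit) divide_pos_pos)
  have "p * (1 + delta m Xs) > 1" using assms(5) pc dstar
    by (simp add: field_simps)
  then have d0: "delta m (X0law p Xs) > 0"
    using X0_delta[OF gXs _ assms(6)] p0 by (simp add: algebra_simps)
  have law_Suc: "lawX m p Xs (Suc k) = step m (lawX m p Xs k)" for k
    by (simp add: lawX_def)
  have inv: "goodq m (lawX m p Xs k) \<and> 0 \<le> delta m (lawX m p Xs k)" for k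
  proof (induction k)
    case 0
    then show ?case using X0_good[OF gXs _ assms(6)] p0 d0 by (simp add: lawX_def)
  next
    case (Suc k)
    then have g: "goodq m (lawX m p Xs k)" and dk: "0 \<le> delta m (lawX m p Xs k)" by auto
    have "0 \<le> Hgf (lawX m p Xs k) (real m)" by (rule goodq.Hgf_nonneg[OF g]) simp
    then show ?case using goodq.step_good[OF g] goodq.step_delta[OF g] dk
      by (simp add: law_Suc)
  qed
  then have g: "goodq m (lawX m p Xs n)" and dn: "0 \<le> delta m (lawX m p Xs n)" by auto
  show ?thesis
  proof (intro conjI impI)
    show "\<forall>s\<in>{0..<real m}. 0 \<le> Theta m (lawX m p Xs n) s \<and> Theta m (lawX m p Xs n) s \<le> 1 + delta m (lawX m p Xs n)"
    proof
      fix s assume "s \<in> {0..<real m}"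
      then show "0 \<le> Theta m (lawX m p Xs n) s \<and> Theta m (lawX m p Xs n) s \<le> 1 + delta m (lawX m p Xs n)"
        using goodq.part_i[OF g assms(1), of s] by auto
    qed
    show "\<forall>s\<in>{real m / 2..<real m}. Theta m (lawX m p Xs (Suc n)) s \<ge>
              real m / s * Theta m (lawX m p Xs n) s * Hgf (lawX m p Xs n) s ^ (m - 1)
              - (3 ^ (m - 2) + 1) * (real m - s) / s
                * (delta m (lawX m p Xs n) - phi m (lawX m p Xs n) s)\<^sup>2
                * Hgf (lawX m p Xs n) s ^ (m - 2)"
    proof
      fix s assume "s \<in> {real m / 2..<real m}"
      then show "Theta m (lawX m p Xs (Suc n)) s \<ge>
              real m / s * Theta m (lawX m p Xs n) s * Hgf (lawX m p Xs n) s ^ (m - 1)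
              - (3 ^ (m - 2) + 1) * (real m - s) / s
                * (delta m (lawX m p Xs n) - phi m (lawX m p Xs n) s)\<^sup>2
                * Hgf (lawX m p Xs n) s ^ (m - 2)"
        using goodq.part_ii[OF g assms(1) dn, of s] law_Suc[of n] by simp
    qed
  qed
qed

end
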